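(* Let $R$ be a commutative ring and $S$ a multiplicative subset of $R$ consisting of non-zero-divisors. If $R$ is a $u$-$S$-Artinian ring, then $R$ is an Artinian ring.
   Context: An $R$-module $M$ is $u$-$S$-Artinian (with respect to $s$) if there exists $s\in S$ such that for every descending chain $M_1\supseteq M_2\supseteq\cdots$ of submodules of $M$ there is $k\ge1$ with $sM_k\subseteq M_n$ for all $n\ge k$. $R$ is a $u$-$S$-Artinian ring if it is $u$-$S$-Artinian as an $R$-module. *)

theory Defs
  imports Main "HOL.Modules"
begin

abbreviation submodule_self :: "'a::comm_ring_1 set \<Rightarrow> bool" where
  "submodule_self I \<equiv> module.subspace ((*)) I"

definition multiplicative_subset :: "'a::comm_ring_1 set \<Rightarrow> bool" where
  "multiplicative_subset S \<longleftrightarrow> 1 \<in> S \<and> (\<forall>s\<in>S. \<forall>t\<in>S. s * t \<in> S)"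

definition non_zero_divisor :: "'a::comm_ring_1 \<Rightarrow> bool" where
  "non_zero_divisor s \<longleftrightarrow> (\<forall>x. s * x = 0 \<longrightarrow> x = 0)"

definition u_S_Artinian_ring :: "'a::comm_ring_1 set \<Rightarrow> bool" where
  "u_S_Artinian_ring S \<longleftrightarrow>
     (\<exists>s\<in>S. \<forall>M :: nat \<Rightarrow> 'a set.
        (\<forall>n. submodule_self (M n)) \<and> (\<forall>n. M (Suc n) \<subseteq> M n) \<longrightarrow>
        (\<exists>k. \<forall>n\<ge>k. (\<lambda>x. s * x) ` M k \<subseteq> M n))"

definition Artinian_ring :: "'a::comm_ring_1 itself \<Rightarrow> bool" where
  "Artinian_ring _ \<longleftrightarrow>
     (\<forall>M :: nat \<Rightarrow> 'a set.
        (\<forall>n. submodule_self (M n)) \<and> (\<forall>n. M (Suc n) \<subseteq> M n) \<longrightarrow>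
        (\<exists>k. \<forall>n\<ge>k. M n = M k))"

end

theory Submission
  imports Defs
begin

lemma mod_self: "module ((*) :: 'a::comm_ring_1 \<Rightarrow> 'a \<Rightarrow> 'a)"
  by unfold_locales (auto simp: algebra_simps)

lemma sub_iff: "submodule_self (I::'a::comm_ring_1 set) \<longleftrightarrow>
   0 \<in> I \<and> (\<forall>x\<in>I. \<forall>y\<in>I. x + y \<in> I) \<and> (\<forall>c. \<forall>x\<in>I. c * x \<in> I)"
  by (rule module.subspace_def[OF mod_self])

lemma nzdD: "non_zero_divisor (s::'a::comm_ring_1) \<Longrightarrow> s * x = 0 \<Longrightarrow> x = 0"
  unfolding non_zero_divisor_def by (drule spec[of _ x], drule mp)

lemma nzd_pow: "non_zero_divisor (s::'a::comm_ring_1) \<Longrightarrow> non_zero_divisor (s ^ n)"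
proof (induction n)
  case 0
  show ?case unfolding non_zero_divisor_def by simp
next
  case (Suc n)
  show ?case unfolding non_zero_divisor_def
  proof (intro allI impI)
    fix x assume "s ^ Suc n * x = 0"
    then have "s * (s ^ n * x) = 0" by (simp only: power_Suc mult.assoc)
    then have "s ^ n * x = 0" by (rule nzdD[OF Suc.prems])
    then show "x = 0" by (rule nzdD[OF Suc.IH[OF Suc.prems]])
  qed
qed

theorem proposition3p2:
  fixes S :: "'a::comm_ring_1 set"
  assumes "multiplicative_subset S"
    and "\<forall>s\<in>S. non_zero_divisor s"
    and "u_S_Artinian_ring S"
  shows "Artinian_ring TYPE('a)"
proof -
  obtain s where sS: "s \<in> S" and H: "\<And>M :: nat \<Rightarrow> 'a set.
        (\<forall>n. submodule_self (M n)) \<and> (\<forall>n. M (Suc n) \<subseteq> M n) \<Longrightarrow>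
        (\<exists>k. \<forall>n\<ge>k. (\<lambda>x. s * x) ` M k \<subseteq> M n)"
    using assms(3) unfolding u_S_Artinian_ring_def by blast
  have nz: "non_zero_divisor s" using assms(2) sS by blast
  define P where "P n = range (\<lambda>x. s ^ n * x)" for n
  have "\<forall>n. submodule_self (P n)"
  proof
    fix n
    show "submodule_self (P n)" unfolding sub_iff P_def
    proof (intro conjI ballI allI)
      show "0 \<in> range ((*) (s ^ n))" by (rule range_eqI[of _ _ 0]) simp
    next
      fix x y assume "x \<in> range ((*) (s ^ n))" "y \<in> range ((*) (s ^ n))"
      then obtain a b where ab: "x = s ^ n * a" "y = s ^ n * b" by (auto simp only: image_iff)
      then have "x + y = s ^ n * (a + b)" by (simp only: distrib_left)
      then show "x + y \<in> range ((*) (s ^ n))" by (rule range_eqI)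
    next
      fix c x assume "x \<in> range ((*) (s ^ n))"
      then obtain a where "x = s ^ n * a" by (auto simp only: image_iff)
      then have "c * x = s ^ n * (c * a)" by (simp only: mult.left_commute)
      then show "c * x \<in> range ((*) (s ^ n))" by (rule range_eqI)
    qed
  qed
  moreover have "\<forall>n. P (Suc n) \<subseteq> P n"
  proof (intro allI subsetI)
    fix n y assume "y \<in> P (Suc n)"
    then obtain a where "y = s ^ Suc n * a" unfolding P_def by blast
    then have "y = s ^ n * (s * a)" by (simp add: mult_ac)
    then show "y \<in> P n" unfolding P_def by (rule range_eqI)
  qed
  ultimately obtain k where k: "\<forall>n\<ge>k. (\<lambda>x. s * x) ` P k \<subseteq> P n"
    using H by blast
  have "s ^ k \<in> P k" unfolding P_def by (rule range_eqI[of _ _ 1]) simp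
  then have "s * s ^ k \<in> (\<lambda>x. s * x) ` P k" by (rule imageI)
  moreover have "(\<lambda>x. s * x) ` P k \<subseteq> P (k+2)" using k by simp
  ultimately have "s * s ^ k \<in> P (k+2)" by (rule subsetD[rotated])
  then obtain r where r: "s * s ^ k = s ^ (k+2) * r" unfolding P_def by blast
  have "s ^ (k+1) * (1 - s * r) = s * s ^ k - s ^ (k+2) * r"
    by (simp add: right_diff_distrib mult_ac)
  also have "\<dots> = s ^ (k+2) * r - s ^ (k+2) * r" by (simp only: r)
  also have "\<dots> = 0" by (rule diff_self)
  finally have "s ^ (k+1) * (1 - s * r) = 0" .
  then have "1 - s * r = 0" by (rule nzdD[OF nzd_pow[OF nz]])
  then have "s * r = 1" by simp
  then have unit: "r * s = 1" by (simp only: mult.commute)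
  show ?thesis unfolding Artinian_ring_def
  proof (intro allI impI)
    fix M :: "nat \<Rightarrow> 'a set"
    assume A: "(\<forall>n. submodule_self (M n)) \<and> (\<forall>n. M (Suc n) \<subseteq> M n)"
    then obtain k where k: "\<forall>n\<ge>k. (\<lambda>x. s * x) ` M k \<subseteq> M n" using H by blast
    have dec: "M n \<subseteq> M k" if "k \<le> n" for n
      using that A by (induction rule: dec_induct) auto
    have inc: "M k \<subseteq> M n" if "k \<le> n" for n
    proof
      fix x assume "x \<in> M k"
      then have "s * x \<in> M n" using k that by blast
      moreover have "submodule_self (M n)" using A by blast
      ultimately have "r * (s * x) \<in> M n" unfolding sub_iff by blast
      moreover have "r * (s * x) = x" using unit by (simp add: mult.assoc[symmetric])
      ultimately show "x \<in> M n" by simp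
    qed
    have "\<forall>n\<ge>k. M n = M k"
    proof (intro allI impI)
      fix n assume "k \<le> n"
      show "M n = M k" using dec[OF \<open>k \<le> n\<close>] inc[OF \<open>k \<le> n\<close>] by (rule subset_antisym)
    qed
    then show "\<exists>k. \<forall>n\<ge>k. M n = M k" by (rule exI)
  qed
qed

end
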